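(* Let $k=2r+1$ with $r\ge1$, $G=BS(1,k)$, and $m>0$. Let \[\mathcal{A}_m=\{a^{x_0}ta^{x_1}t\cdots a^{x_{m-1}}t\mid x_i\in\mathbb{Z},\ |x_i|\le r\}\setminus\{(a^{-r}t)^m\}.\] Then two words in $\mathcal{A}_m$ represent conjugate elements of $G$ if and only if they are cyclic permutations of each other, and every word in $\mathcal{A}_m$ is a conjugacy geodesic.
   Context: $BS(1,k)=\langle a,t\mid tat^{-1}=a^k\rangle$. $a^x$ denotes $|x|$ copies of $a$ or $a^{-1}$ according to the sign of $x$. Word length is with respect to $\{a,t\}$. A word is a conjugacy geodesic for the conjugacy class of the element it represents if it is a geodesic word and the element it represents has minimal length among all elements of its conjugacy class. *)

theory Defs
  imports Main
begin

(* Generators of BS(1,k) = < a, t | t a t^-1 = a^k >. A letter is a generator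
   together with a flag: False = the generator itself, True = its inverse. *)
datatype gen = A | T

type_synonym letter = "gen \<times> bool"
type_synonym word = "letter list"

definition inv_letter :: "letter \<Rightarrow> letter" where
  "inv_letter x = (fst x, \<not> snd x)"

definition inv_word :: "word \<Rightarrow> word" where
  "inv_word w = rev (map inv_letter w)"

inductive bs_eq :: "nat \<Rightarrow> word \<Rightarrow> word \<Rightarrow> bool" for k :: nat where
  bs_refl: "bs_eq k w w"
| bs_sym: "bs_eq k u v \<Longrightarrow> bs_eq k v u"
| bs_trans: "bs_eq k u v \<Longrightarrow> bs_eq k v w \<Longrightarrow> bs_eq k u w"
| bs_cancel: "bs_eq k (u @ [x, inv_letter x] @ v) (u @ v)"
| bs_rel: "bs_eq k (u @ [(T,False), (A,False), (T,True)] @ v) (u @ replicate k (A,False) @ v)"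

definition elt_length :: "nat \<Rightarrow> word \<Rightarrow> nat" where
  "elt_length k w = (LEAST n. \<exists>w'. bs_eq k w w' \<and> length w' = n)"

definition geodesic :: "nat \<Rightarrow> word \<Rightarrow> bool" where
  "geodesic k w \<longleftrightarrow> length w = elt_length k w"

definition bs_conj :: "nat \<Rightarrow> word \<Rightarrow> word \<Rightarrow> bool" where
  "bs_conj k u v \<longleftrightarrow> (\<exists>g. bs_eq k (g @ u @ inv_word g) v)"

definition conj_geodesic :: "nat \<Rightarrow> word \<Rightarrow> bool" where
  "conj_geodesic k w \<longleftrightarrow> geodesic k w \<and>
     (\<forall>v. bs_conj k w v \<longrightarrow> elt_length k w \<le> elt_length k v)"

definition apow :: "int \<Rightarrow> word" where
  "apow x = replicate (nat \<bar>x\<bar>) (A, x < 0)"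

definition blockword :: "int list \<Rightarrow> word" where
  "blockword xs = concat (map (\<lambda>x. apow x @ [(T, False)]) xs)"

definition A_set :: "nat \<Rightarrow> nat \<Rightarrow> word set" where
  "A_set r m = {blockword xs | xs. length xs = m \<and> (\<forall>x\<in>set xs. \<bar>x\<bar> \<le> int r)}
               - {blockword (replicate m (- int r))}"

end

theory Submission
  imports Defs
begin


fun texp :: "word \<Rightarrow> int" where
  "texp [] = 0"
| "texp ((A,b)#w) = texp w"
| "texp ((T,b)#w) = (if b then -1 else 1) + texp w"

fun phi :: "int \<Rightarrow> nat \<Rightarrow> int \<Rightarrow> word \<Rightarrow> int" where
  "phi K m h [] = 0"
| "phi K m h ((A,b)#w) = (if b then -1 else 1) * K ^ nat (h mod int m) + phi K m h w"
| "phi K m h ((T,b)#w) = phi K m (if b then h - 1 else h + 1) w"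

fun vl :: "int \<Rightarrow> int list \<Rightarrow> int" where
  "vl K [] = 0"
| "vl K (a#l) = a + K * vl K l"

definition wt :: "int list \<Rightarrow> int" where
  "wt l = sum_list (map abs l)"

definition bal :: "nat \<Rightarrow> int list \<Rightarrow> bool" where
  "bal r l \<longleftrightarrow> (\<forall>x\<in>set l. \<bar>x\<bar> \<le> int r)"

lemma texp_append[simp]: "texp (u @ v) = texp u + texp v"
  by (induction u rule: texp.induct) auto

lemma phi_append: "phi K m h (u @ v) = phi K m h u + phi K m (h + texp u) v"
  by (induction K m h u rule: phi.induct) (auto simp: algebra_simps)

lemma dvd_pow_sub1: "((x::int) - 1) dvd (x ^ q - 1)"
proof (induction q)
  case 0 then show ?case by simp
next
  case (Suc q)
  have e: "x ^ Suc q - 1 = x * (x ^ q - 1) + (x - 1)" by (simp add: algebra_simps)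
  have d: "(x - 1) dvd (x * (x ^ q - 1) + (x - 1))"
    using Suc by (intro dvd_add dvd_mult dvd_refl)
  show ?case by (subst e) (rule d)
qed

lemma pow_mod_cong:
  fixes K :: int assumes "a mod m = b mod m"
  shows "(K^m - 1) dvd (K^a - K^b)"
proof -
  have a: "K^a = K^(a mod m) * (K^m)^(a div m)"
    by (metis mod_div_mult_eq power_add power_mult mult.commute)
  have b: "K^b = K^(b mod m) * (K^m)^(b div m)"
    by (metis mod_div_mult_eq power_add power_mult mult.commute)
  have "K^a - K^b = K^(a mod m) * (((K^m)^(a div m) - 1) - ((K^m)^(b div m) - 1))"
    using a b assms by (simp add: algebra_simps)
  moreover have "(K^m - 1) dvd (((K^m)^(a div m) - 1) - ((K^m)^(b div m) - 1))"
    by (intro dvd_diff dvd_pow_sub1)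
  ultimately show ?thesis by simp
qed

lemma nat_mod_add:
  assumes "m > 0"
  shows "nat ((h + d) mod int m) mod m = (nat (d mod int m) + nat (h mod int m)) mod m"
proof -
  have "int (nat ((h + d) mod int m) mod m) = (h + d) mod int m"
    using assms by (simp add: zmod_int)
  moreover have "int ((nat (d mod int m) + nat (h mod int m)) mod m) = (d mod int m + h mod int m) mod int m"
    using assms by (simp add: zmod_int)
  moreover have "(d mod int m + h mod int m) mod int m = (h + d) mod int m"
    by (simp add: mod_add_eq add.commute)
  ultimately have "int (nat ((h + d) mod int m) mod m) = int ((nat (d mod int m) + nat (h mod int m)) mod m)"
    by simp
  then show ?thesis by (simp only: of_nat_eq_iff)
qed

lemma phi_shift:
  assumes "m > 0"
  shows "(K^m - 1) dvd (phi K m (h + d) w - K ^ nat (d mod int m) * phi K m h w)"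
proof (induction w arbitrary: h)
  case Nil
  then show ?case by simp
next
  case (Cons x w)
  obtain g b where x: "x = (g,b)" by fastforce
  show ?case
  proof (cases g)
    case A
    have "(K^m - 1) dvd (K ^ nat ((h + d) mod int m) - K ^ (nat (d mod int m) + nat (h mod int m)))"
      by (rule pow_mod_cong) (rule nat_mod_add[OF assms])
    then have "(K^m - 1) dvd ((if b then -1 else 1) * (K ^ nat ((h + d) mod int m) - K ^ (nat (d mod int m) + nat (h mod int m))))"
      by simp
    then have "(K^m - 1) dvd ((if b then -1 else 1) * (K ^ nat ((h + d) mod int m) - K ^ (nat (d mod int m) + nat (h mod int m)))
        + (phi K m (h + d) w - K ^ nat (d mod int m) * phi K m h w))"
      using Cons by (rule dvd_add)
    then show ?thesis using x A by (simp add: algebra_simps power_add)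
  next
    case T
    then show ?thesis using x Cons[of "h - 1"] Cons[of "h + 1"] by (cases b) (auto simp: algebra_simps)
  qed
qed



lemma phi_rep: "phi K m h (replicate n (A,b)) = int n * (if b then -1 else 1) * K ^ nat (h mod int m)"
  by (induction n) (auto simp: algebra_simps)

lemma texp_rep: "texp (replicate n (A,b)) = 0"
  by (induction n) auto

lemma texp_inv_pair: "texp [x, inv_letter x] = 0"
  by (cases x, rename_tac g b, case_tac g) (auto simp: inv_letter_def)

lemma phi_inv_pair: "phi K m h [x, inv_letter x] = 0"
  by (cases x, rename_tac g b, case_tac g) (auto simp: inv_letter_def)

lemma texp_inv_pair2[simp]: "texp (x # inv_letter x # v) = texp v"
  by (cases x, rename_tac g b, case_tac g) (auto simp: inv_letter_def)

lemma phi_inv_pair2[simp]: "phi K m h (x # inv_letter x # v) = phi K m h v"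
  by (cases x, rename_tac g b, case_tac g) (auto simp: inv_letter_def)

lemma mod_one_suc: "m > 0 \<Longrightarrow> (nat (1 mod int m) + n) mod m = Suc n mod m"
  by (cases "m = 1") auto

lemma bs_eq_inv:
  assumes "bs_eq k u v" "m > 0"
  shows "texp u = texp v \<and> (\<forall>h. (int k ^ m - 1) dvd (phi (int k) m h u - phi (int k) m h v))"
  using assms(1)
proof (induction rule: bs_eq.induct)
  case (bs_refl w)
  then show ?case by simp
next
  case (bs_sym u v)
  show ?case
  proof (intro conjI allI)
    show "texp v = texp u" using bs_sym by simp
  next
    fix h
    have "(int k ^ m - 1) dvd - (phi (int k) m h u - phi (int k) m h v)"
      using bs_sym by (simp only: dvd_minus_iff)
    then show "(int k ^ m - 1) dvd (phi (int k) m h v - phi (int k) m h u)" by simp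
  qed
next
  case (bs_trans u v w)
  show ?case
  proof (intro conjI allI)
    show "texp u = texp w" using bs_trans by simp
  next
    fix h
    have "(int k ^ m - 1) dvd ((phi (int k) m h u - phi (int k) m h v) + (phi (int k) m h v - phi (int k) m h w))"
      using bs_trans by (intro dvd_add) auto
    then show "(int k ^ m - 1) dvd (phi (int k) m h u - phi (int k) m h w)" by simp
  qed
next
  case (bs_cancel u x v)
  then show ?case by (simp add: phi_append texp_inv_pair phi_inv_pair)
next
  case (bs_rel u v)
  show ?case
  proof
    show "texp (u @ [(T, False), (A, False), (T, True)] @ v) = texp (u @ replicate k (A, False) @ v)"
      by (simp add: texp_rep)
    show "\<forall>h. (int k ^ m - 1) dvd (phi (int k) m h (u @ [(T, False), (A, False), (T, True)] @ v) -
           phi (int k) m h (u @ replicate k (A, False) @ v))"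
    proof
      fix h
      let ?h = "h + texp u"
      have 1: "phi (int k) m h (u @ [(T, False), (A, False), (T, True)] @ v) =
          phi (int k) m h u + int k ^ nat ((?h + 1) mod int m) + phi (int k) m ?h v"
        by (simp add: phi_append)
      have 2: "phi (int k) m h (u @ replicate k (A, False) @ v) =
          phi (int k) m h u + int k ^ Suc (nat (?h mod int m)) + phi (int k) m ?h v"
        by (simp add: phi_append phi_rep texp_rep)
      have "(int k ^ m - 1) dvd (int k ^ nat ((?h + 1) mod int m) - int k ^ Suc (nat (?h mod int m)))"
        using nat_mod_add[OF assms(2), of ?h 1] assms(2)
        by (intro pow_mod_cong) (simp add: mod_one_suc)
      then show "(int k ^ m - 1) dvd (phi (int k) m h (u @ [(T, False), (A, False), (T, True)] @ v) -
           phi (int k) m h (u @ replicate k (A, False) @ v))"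
        unfolding 1 2 by simp
    qed
  qed
qed

lemma phi_apow: "phi K m h (apow x) = x * K ^ nat (h mod int m)"
  by (simp add: apow_def phi_rep)

lemma texp_apow[simp]: "texp (apow x) = 0"
  by (simp add: apow_def texp_rep)

lemma blockword_Nil[simp]: "blockword [] = []"
  by (simp add: blockword_def)

lemma blockword_Cons: "blockword (x#xs) = apow x @ (T,False) # blockword xs"
  by (simp add: blockword_def)

lemma texp_blockword: "texp (blockword xs) = int (length xs)"
  by (induction xs) (auto simp: blockword_Cons)

lemma length_apow: "int (length (apow x)) = \<bar>x\<bar>"
  by (simp add: apow_def)

lemma length_blockword: "int (length (blockword xs)) = int (length xs) + wt xs"
  by (induction xs) (auto simp: blockword_Cons wt_def length_apow)

lemma phi_blockword:
  "i + length xs \<le> m \<Longrightarrow> phi K m (int i) (blockword xs) = K ^ i * vl K xs"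
proof (induction xs arbitrary: i)
  case Nil
  then show ?case by simp
next
  case (Cons x xs)
  have im: "int i mod int m = int i" using Cons.prems by simp
  have "phi K m (int i) (blockword (x#xs)) = x * K ^ i + phi K m (int (Suc i)) (blockword xs)"
    by (simp add: blockword_Cons phi_append phi_apow im nat_int add.commute)
  also have "\<dots> = x * K ^ i + K ^ Suc i * vl K xs"
    using Cons.IH[of "Suc i"] Cons.prems by simp
  finally show ?case by (simp add: algebra_simps)
qed

lemma inv_word_Cons: "inv_word (x#g) = inv_word g @ [inv_letter x]"
  by (simp add: inv_word_def)

lemma inv_word_Nil[simp]: "inv_word [] = []"
  by (simp add: inv_word_def)

lemma texp_inv: "texp (inv_word g) = - texp g"
proof (induction g)
  case Nil then show ?case by simp
next
  case (Cons x g)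
  then show ?case
    by (cases x, rename_tac a b, case_tac a) (auto simp: inv_word_Cons inv_letter_def)
qed

lemma phi_inv: "phi K m h (inv_word g) = - phi K m (h - texp g) g"
proof (induction g arbitrary: h)
  case Nil then show ?case by simp
next
  case (Cons x g)
  then show ?case
    by (cases x, rename_tac a b, case_tac a)
      (auto simp: inv_word_Cons inv_letter_def phi_append texp_inv algebra_simps)
qed

lemma phi_conj:
  assumes "m > 0" "texp u = int m"
  shows "(K^m - 1) dvd (phi K m 0 (g @ u @ inv_word g) - K ^ nat (texp g mod int m) * phi K m 0 u)"
proof -
  let ?d = "texp g"
  have e: "phi K m 0 (g @ u @ inv_word g) = phi K m 0 g + phi K m ?d u - phi K m (int m) g"
    using assms by (simp add: phi_append phi_inv)
  have 1: "(K^m - 1) dvd (phi K m (0 + int m) g - K ^ nat (int m mod int m) * phi K m 0 g)"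
    by (rule phi_shift[OF assms(1)])
  have 2: "(K^m - 1) dvd (phi K m (0 + ?d) u - K ^ nat (?d mod int m) * phi K m 0 u)"
    by (rule phi_shift[OF assms(1)])
  have "(K^m - 1) dvd ((phi K m (0 + ?d) u - K ^ nat (?d mod int m) * phi K m 0 u)
        - (phi K m (0 + int m) g - K ^ nat (int m mod int m) * phi K m 0 g))"
    using 1 2 by (rule dvd_diff[rotated])
  then show ?thesis unfolding e by (simp add: algebra_simps)
qed



lemma vl_append: "vl K (l @ l') = vl K l + K ^ length l * vl K l'"
  by (induction l) (auto simp: algebra_simps)

lemma vl_update: "i < length l \<Longrightarrow> vl K (l[i := l!i + s]) = vl K l + s * K ^ i"
proof (induction l arbitrary: i)
  case Nil then show ?case by simp
next
  case (Cons a l)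
  then show ?case by (cases i) (auto simp: algebra_simps)
qed

lemma wt_Nil[simp]: "wt [] = 0" by (simp add: wt_def)
lemma wt_Cons[simp]: "wt (a#l) = \<bar>a\<bar> + wt l" by (simp add: wt_def)
lemma wt_append[simp]: "wt (l @ l') = wt l + wt l'" by (simp add: wt_def)
lemma wt_nonneg: "wt l \<ge> 0" by (induction l) auto

lemma wt_update: "i < length l \<Longrightarrow> wt (l[i := l!i + s]) \<le> wt l + \<bar>s\<bar>"
proof (induction l arbitrary: i)
  case Nil then show ?case by simp
next
  case (Cons a l)
  then show ?case by (cases i) auto
qed

lemma wt_rotate1: "wt (rotate1 l) = wt l"
  by (cases l) auto

lemma wt_rotate: "wt (rotate n l) = wt l"
  by (induction n) (auto simp: wt_rotate1)

lemma wt_replicate0[simp]: "wt (replicate n 0) = 0"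
  by (induction n) auto

lemma nat_mod_lt: "m > 0 \<Longrightarrow> nat (h mod int m) < m"
  by (simp add: nat_less_iff)

fun dig :: "nat \<Rightarrow> int \<Rightarrow> word \<Rightarrow> int list" where
  "dig m h [] = replicate m 0"
| "dig m h ((A,b)#w) = (let l = dig m h w; i = nat (h mod int m) in l[i := l!i + (if b then -1 else 1)])"
| "dig m h ((T,b)#w) = dig m (if b then h - 1 else h + 1) w"

lemma length_dig[simp]: "length (dig m h w) = m"
  by (induction m h w rule: dig.induct) (auto simp: Let_def)

lemma vl_rep0[simp]: "vl K (replicate n 0) = 0"
  by (induction n) auto

lemma vl_dig: "m > 0 \<Longrightarrow> vl K (dig m h w) = phi K m h w"
proof (induction m h w rule: dig.induct)
  case (1 m h)
  then show ?case by simp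
next
  case (2 m h b w)
  have i: "nat (h mod int m) < length (dig m h w)" using 2 nat_mod_lt by simp
  show ?case using 2 vl_update[OF i] by (simp add: Let_def algebra_simps)
next
  case (3 m h b w)
  then show ?case by simp
qed

lemma length_bound: "\<bar>texp w\<bar> + wt (dig m h w) \<le> int (length w)"
proof (induction m h w rule: dig.induct)
  case (1 m h)
  then show ?case by simp
next
  case (2 m h b w)
  show ?case
  proof (cases "m = 0")
    case True
    then have "dig m h w = []" using length_dig[of m h w] by (simp only: length_0_conv)
    then show ?thesis using 2 True by (simp add: Let_def)
  next
    case False
    have i: "nat (h mod int m) < length (dig m h w)" using False nat_mod_lt by simp
    show ?thesis using 2 wt_update[OF i, of "-1"] wt_update[OF i, of "1"] by (cases b) (simp_all add: Let_def)
  qed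
next
  case (3 m h b w)
  then show ?case by auto
qed


lemma vl_rep_diff:
  assumes "length z = m" "length x = m" "vl K z - vl K x = q * (K^m - 1)"
  shows "vl K (concat (replicate L z)) - vl K (concat (replicate L x)) = q * (K ^ (L * m) - 1)"
proof (induction L)
  case 0 then show ?case by simp
next
  case (Suc L)
  have "vl K (concat (replicate (Suc L) z)) - vl K (concat (replicate (Suc L) x))
      = (vl K z - vl K x) + K^m * (vl K (concat (replicate L z)) - vl K (concat (replicate L x)))"
    using assms by (simp add: vl_append algebra_simps)
  also have "\<dots> = q * (K^m - 1) + K^m * (q * (K ^ (L * m) - 1))" using Suc assms by simp
  also have "\<dots> = q * (K ^ (Suc L * m) - 1)" by (simp add: algebra_simps power_add)
  finally show ?case .
qed

lemma wt_rep: "wt (concat (replicate L z)) = int L * wt z"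
  by (induction L) (auto simp: algebra_simps)

lemma bal_rep: "bal r x \<Longrightarrow> bal r (concat (replicate L x))"
  by (simp add: bal_def)

lemma abs_carry:
  fixes x0 c :: int
  assumes "\<bar>x0\<bar> \<le> int r" "K = 2 * int r + 1"
  shows "\<bar>x0\<bar> + \<bar>c\<bar> \<le> \<bar>x0 + K * c\<bar>"
proof (cases "c = 0")
  case True then show ?thesis by simp
next
  case False
  then have "\<bar>c\<bar> \<ge> 1" by simp
  then have "int r * \<bar>c\<bar> \<ge> int r" by (simp add: mult_le_cancel_left1)
  moreover have "\<bar>K * c\<bar> = K * \<bar>c\<bar>" using assms by (simp add: abs_mult)
  moreover have "K * \<bar>c\<bar> = 2 * (int r * \<bar>c\<bar>) + \<bar>c\<bar>" using assms by (simp add: algebra_simps)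
  ultimately show ?thesis using assms by linarith
qed

lemma noncyclic_min:
  assumes "bal r x" "K = 2 * int r + 1" "vl K z = vl K x"
  shows "wt x \<le> wt z"
  using assms
proof (induction x arbitrary: z)
  case Nil
  then show ?case by (simp add: wt_nonneg)
next
  case (Cons x0 xs)
  define z0 where "z0 = (case z of [] \<Rightarrow> 0 | a # l \<Rightarrow> a)"
  define zs where "zs = tl z"
  have zv: "vl K z = z0 + K * vl K zs" and zw: "wt z = \<bar>z0\<bar> + wt zs"
    by (cases z; simp add: z0_def zs_def)+
  have b0: "\<bar>x0\<bar> \<le> int r" and bs: "bal r xs" using Cons.prems by (auto simp: bal_def)
  have eq: "z0 + K * vl K zs = x0 + K * vl K xs" using Cons.prems zv by simp
  then have "K dvd (z0 - x0)"
    by (metis add_diff_cancel_left' diff_diff_eq2 dvd_diff dvd_triv_left add.commute)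
  then obtain c where c: "z0 - x0 = K * c" by (auto elim: dvdE)
  have Kpos: "K > 0" using Cons.prems by simp
  have "K * vl K xs = K * (c + vl K zs)" using eq c by (simp add: algebra_simps)
  then have vxs: "vl K xs = c + vl K zs" using Kpos by simp
  define z' where "z' = (case zs of [] \<Rightarrow> [c] | b # l \<Rightarrow> (b + c) # l)"
  have vz': "vl K z' = c + vl K zs" and wz': "wt z' \<le> \<bar>c\<bar> + wt zs"
    by (cases zs; auto simp: z'_def algebra_simps)+
  have "wt xs \<le> wt z'" using Cons.IH[OF bs Cons.prems(2)] vz' vxs by simp
  moreover have "\<bar>x0\<bar> + \<bar>c\<bar> \<le> \<bar>z0\<bar>"
    using abs_carry[OF b0 Cons.prems(2), of c] c by (simp add: algebra_simps)
  ultimately show ?case using wz' zw by simp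
qed

lemma cyclic_min:
  assumes "bal r x" "K = 2 * int r + 1" "length x = m" "length z = m" "m > 0"
    and "(K^m - 1) dvd (vl K z - vl K x)"
  shows "wt x \<le> wt z"
proof -
  obtain q where q: "vl K z - vl K x = (K^m - 1) * q" using assms(6) by (auto elim: dvdE)
  define L where "L = Suc (nat (2 * \<bar>q\<bar>))"
  define Z where "Z = concat (replicate L z)"
  define X where "X = concat (replicate L x)"
  have lZ: "length Z = L * m" using assms by (simp add: Z_def length_concat sum_list_replicate)
  have Z0: "0 < length Z" using lZ assms by (simp add: L_def)
  have D: "vl K Z - vl K X = q * (K ^ (L * m) - 1)"
    unfolding Z_def X_def by (rule vl_rep_diff) (use assms q in \<open>auto simp: algebra_simps\<close>)
  define Z' where "Z' = Z[0 := Z!0 + q] @ [-q]"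
  have "vl K Z' = vl K Z + q - q * K ^ (L * m)"
    unfolding Z'_def using vl_update[OF Z0, of K q] lZ by (simp add: vl_append algebra_simps)
  then have vZ': "vl K Z' = vl K X" using D by (simp add: algebra_simps)
  have wZ': "wt Z' \<le> wt Z + 2 * \<bar>q\<bar>"
    unfolding Z'_def using wt_update[OF Z0, of q] by simp
  have "wt X \<le> wt Z'"
    by (rule noncyclic_min[OF _ assms(2) vZ']) (use assms(1) in \<open>simp add: X_def bal_rep\<close>)
  then have "int L * wt x \<le> int L * wt z + 2 * \<bar>q\<bar>"
    using wZ' by (simp add: X_def Z_def wt_rep)
  also have "\<dots> < int L * wt z + int L" by (simp add: L_def)
  finally have "int L * wt x < int L * (wt z + 1)" by (simp add: algebra_simps)
  then have "wt x < wt z + 1" by (simp add: mult_less_cancel_left)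
  then show ?thesis by simp
qed



lemma vl_rotate1:
  assumes "length y = m" "m > 0"
  shows "(K^m - 1) dvd (vl K y - K * vl K (rotate1 y))"
proof (cases y)
  case Nil then show ?thesis using assms by simp
next
  case (Cons a l)
  have lm: "length l + 1 = m" using assms Cons by simp
  have "vl K y - K * vl K (rotate1 y) = a - K * K ^ length l * a"
    using Cons by (simp add: vl_append algebra_simps)
  also have "\<dots> = (K^m - 1) * (- a)" using lm by (auto simp: algebra_simps)
  finally show ?thesis by simp
qed

lemma vl_rotate:
  assumes "length x = m" "m > 0"
  shows "(K^m - 1) dvd (vl K x - K^j * vl K (rotate j x))"
proof (induction j)
  case 0 then show ?case by simp
next
  case (Suc j)
  have "(K^m - 1) dvd ((vl K x - K^j * vl K (rotate j x)) + K^j * (vl K (rotate j x) - K * vl K (rotate1 (rotate j x))))"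
    using Suc vl_rotate1[of "rotate j x" m K] assms by (intro dvd_add dvd_mult) auto
  then show ?case by (simp add: algebra_simps)
qed

lemma vl_range:
  assumes "bal r x" "K = 2 * int r + 1"
  shows "2 * vl K x \<le> K ^ length x - 1 \<and> - (K ^ length x - 1) \<le> 2 * vl K x
    \<and> (x \<noteq> replicate (length x) (- int r) \<longrightarrow> - (K ^ length x - 1) < 2 * vl K x)"
  using assms(1)
proof (induction x)
  case Nil then show ?case by simp
next
  case (Cons a l)
  have a: "\<bar>a\<bar> \<le> int r" and bl: "bal r l" using Cons.prems by (auto simp: bal_def)
  note IH = Cons.IH[OF bl]
  have K0: "K \<ge> 0" using assms by simp
  have e: "2 * vl K (a # l) = 2 * a + K * (2 * vl K l)" by (simp add: algebra_simps)
  have p: "K ^ length (a#l) = K * K ^ length l" by simp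
  have u: "K * (2 * vl K l) \<le> K * (K ^ length l - 1)" using IH K0 by (intro mult_left_mono) auto
  have lo: "K * (- (K ^ length l - 1)) \<le> K * (2 * vl K l)" using IH K0 by (intro mult_left_mono) auto
  have s1: "2 * vl K (a # l) \<le> K ^ length (a#l) - 1"
    using u a assms(2) unfolding e p by (simp add: algebra_simps)
  have s2: "- (K ^ length (a#l) - 1) \<le> 2 * vl K (a # l)"
    using lo a assms(2) unfolding e p by (simp add: algebra_simps)
  have s3: "- (K ^ length (a#l) - 1) < 2 * vl K (a # l)" if ne: "a # l \<noteq> replicate (length (a#l)) (- int r)"
  proof (cases "a = - int r")
    case True
    then have "l \<noteq> replicate (length l) (- int r)" using ne by simp
    then have "- (K ^ length l - 1) + 1 \<le> 2 * vl K l" using IH by simp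
    then have "K * (- (K ^ length l - 1) + 1) \<le> K * (2 * vl K l)" using K0 by (intro mult_left_mono) auto
    then show ?thesis using a assms(2) unfolding e p by (simp add: algebra_simps)
  next
    case False
    then have "a \<ge> - int r + 1" using a by simp
    then show ?thesis using lo assms(2) unfolding e p by (simp add: algebra_simps)
  qed
  show ?case using s1 s2 s3 by blast
qed

lemma vl_unique:
  assumes "bal r x" "bal r y" "K = 2 * int r + 1" "length x = length y" "vl K x = vl K y"
  shows "x = y"
  using assms
proof (induction x arbitrary: y)
  case Nil then show ?case by simp
next
  case (Cons a l)
  obtain b l' where y: "y = b # l'" using Cons.prems by (cases y) auto
  have a: "\<bar>a\<bar> \<le> int r" and bl: "bal r l" using Cons.prems by (auto simp: bal_def)
  have b: "\<bar>b\<bar> \<le> int r" and bl': "bal r l'" using Cons.prems y by (auto simp: bal_def)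
  have eq: "a - b = K * (vl K l' - vl K l)" using Cons.prems y by (simp add: algebra_simps)
  then have "K dvd (a - b)" by simp
  then obtain c where c: "a - b = K * c" by (auto elim: dvdE)
  have "c = 0"
  proof (rule ccontr)
    assume "c \<noteq> 0"
    then have "\<bar>K * c\<bar> \<ge> K" using Cons.prems by (simp add: abs_mult mult_le_cancel_left1)
    then show False using a b c Cons.prems by linarith
  qed
  then have ab: "a = b" and "vl K l = vl K l'" using c eq Cons.prems by auto
  then have "l = l'" using Cons.IH[OF bl bl'] Cons.prems y by simp
  then show ?case using ab y by simp
qed

lemma blockword_append: "blockword (a @ b) = blockword a @ blockword b"
  by (simp add: blockword_def)

lemma blockword_rotate1: "\<exists>n. blockword (rotate1 ys) = rotate n (blockword ys)"
proof (cases ys)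
  case Nil then show ?thesis by simp
next
  case (Cons y l)
  have "blockword (rotate1 ys) = blockword l @ (apow y @ [(T,False)])"
    using Cons by (simp add: blockword_append blockword_Cons)
  also have "\<dots> = rotate (length (apow y @ [(T,False)])) ((apow y @ [(T,False)]) @ blockword l)"
    by (rule rotate_append[symmetric])
  also have "(apow y @ [(T,False)]) @ blockword l = blockword ys"
    using Cons by (simp add: blockword_Cons)
  finally show ?thesis by blast
qed

lemma blockword_rotate: "\<exists>n. blockword (rotate j xs) = rotate n (blockword xs)"
proof (induction j)
  case 0 then show ?case by (metis rotate0 id_apply)
next
  case (Suc j)
  then obtain n where n: "blockword (rotate j xs) = rotate n (blockword xs)" by blast
  obtain n' where "blockword (rotate1 (rotate j xs)) = rotate n' (blockword (rotate j xs))"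
    using blockword_rotate1 by blast
  then have "blockword (rotate (Suc j) xs) = rotate (n' + n) (blockword xs)"
    using n by (simp add: rotate_rotate)
  then show ?case by blast
qed

lemma inv_inv_letter[simp]: "inv_letter (inv_letter x) = x"
  by (simp add: inv_letter_def)

lemma inv_inv_word[simp]: "inv_word (inv_word p) = p"
  by (simp add: inv_word_def rev_map comp_def)

lemma bs_cancel_word: "bs_eq k (inv_word p @ p @ s) s"
proof (induction p)
  case Nil then show ?case by (simp add: bs_refl)
next
  case (Cons x p)
  have "bs_eq k (inv_word p @ [inv_letter x, inv_letter (inv_letter x)] @ (p @ s)) (inv_word p @ (p @ s))"
    by (rule bs_cancel)
  then have "bs_eq k (inv_word (x # p) @ (x # p) @ s) (inv_word p @ p @ s)"
    by (simp add: inv_word_Cons)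
  then show ?case using Cons by (rule bs_trans)
qed



lemma A_setE:
  assumes "w \<in> A_set r m"
  obtains xs where "w = blockword xs" "length xs = m" "bal r xs" "xs \<noteq> replicate m (- int r)"
proof -
  from assms obtain xs where "w = blockword xs" "length xs = m" "\<forall>x\<in>set xs. \<bar>x\<bar> \<le> int r"
    "w \<noteq> blockword (replicate m (- int r))" unfolding A_set_def by blast
  then show ?thesis by (intro that) (auto simp: bal_def)
qed

lemma conj_data:
  assumes "w = blockword xs" "length xs = m" "m > 0" "bs_conj k w v"
  shows "texp v = int m \<and> (\<exists>j. (int k ^ m - 1) dvd (phi (int k) m 0 v - vl (int k) (rotate j xs)))"
proof -
  let ?K = "int k"
  let ?M = "?K ^ m - 1"
  obtain g where g: "bs_eq k (g @ w @ inv_word g) v" using assms(4) by (auto simp: bs_conj_def)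
  have tw: "texp w = int m" using assms by (simp add: texp_blockword)
  note inv = bs_eq_inv[OF g assms(3)]
  have tv: "texp v = int m" using inv tw by (simp add: texp_inv)
  have d1: "?M dvd (phi ?K m 0 (g @ w @ inv_word g) - phi ?K m 0 v)" using inv by blast
  define d where "d = nat (texp g mod int m)"
  have dm: "d < m" using assms(3) by (simp add: d_def nat_mod_lt)
  have pw: "phi ?K m 0 w = vl ?K xs" using phi_blockword[of 0 xs m ?K] assms by simp
  have d2: "?M dvd (phi ?K m 0 (g @ w @ inv_word g) - ?K ^ d * vl ?K xs)"
    using phi_conj[OF assms(3) tw, of ?K g] pw by (simp add: d_def)
  define j where "j = m - d"
  have d3: "?M dvd (vl ?K xs - ?K ^ j * vl ?K (rotate j xs))"
    by (rule vl_rotate) (use assms in auto)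
  have d4: "?M dvd (?K ^ m - ?K ^ 0)" by (rule pow_mod_cong) simp
  have dj: "d + j = m" using dm by (simp add: j_def)
  have d1': "?M dvd (phi ?K m 0 v - phi ?K m 0 (g @ w @ inv_word g))"
    using d1 by (metis dvd_minus_iff minus_diff_eq)
  have "?M dvd ((phi ?K m 0 v - phi ?K m 0 (g @ w @ inv_word g))
        + (phi ?K m 0 (g @ w @ inv_word g) - ?K ^ d * vl ?K xs)
        + ?K ^ d * (vl ?K xs - ?K ^ j * vl ?K (rotate j xs))
        + (?K ^ m - ?K ^ 0) * vl ?K (rotate j xs))"
    by (rule dvd_add[OF dvd_add[OF dvd_add[OF d1' d2] dvd_mult[OF d3]] dvd_mult2[OF d4]])
  also have "((phi ?K m 0 v - phi ?K m 0 (g @ w @ inv_word g))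
        + (phi ?K m 0 (g @ w @ inv_word g) - ?K ^ d * vl ?K xs)
        + ?K ^ d * (vl ?K xs - ?K ^ j * vl ?K (rotate j xs))
        + (?K ^ m - ?K ^ 0) * vl ?K (rotate j xs)) = phi ?K m 0 v - vl ?K (rotate j xs)"
    by (simp add: algebra_simps power_add[symmetric] dj)
  finally show ?thesis using tv by blast
qed

lemma length_lower:
  assumes "w = blockword xs" "length xs = m" "m > 0" "bal r xs" "k = 2 * r + 1" "bs_conj k w v"
  shows "length w \<le> length v"
proof -
  let ?K = "int k"
  obtain j where tv: "texp v = int m" and dv: "(?K ^ m - 1) dvd (phi ?K m 0 v - vl ?K (rotate j xs))"
    using conj_data[OF assms(1-3,6)] by blast
  have "wt (rotate j xs) \<le> wt (dig m 0 v)"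
    by (rule cyclic_min[of r _ ?K m]) (use assms dv vl_dig[OF assms(3)] in \<open>auto simp: bal_def\<close>)
  then have "wt xs \<le> wt (dig m 0 v)" by (simp add: wt_rotate)
  moreover have "\<bar>texp v\<bar> + wt (dig m 0 v) \<le> int (length v)" by (rule length_bound)
  moreover have "int (length w) = int m + wt xs" using assms length_blockword by simp
  ultimately show ?thesis using tv by simp
qed

lemma conj_self: "bs_conj k w w"
  unfolding bs_conj_def by (rule exI[of _ "[]"]) (simp add: bs_refl)

lemma conj_trans_eq: "bs_conj k w v \<Longrightarrow> bs_eq k v v' \<Longrightarrow> bs_conj k w v'"
  unfolding bs_conj_def by (auto intro: bs_trans)

lemma elt_length_ex: "\<exists>w'. bs_eq k v w' \<and> length w' = elt_length k v"
  unfolding elt_length_def by (rule LeastI_ex) (use bs_refl in blast)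

lemma geod_part:
  assumes "w = blockword xs" "length xs = m" "m > 0" "bal r xs" "k = 2 * r + 1"
  shows "conj_geodesic k w"
proof -
  have low: "length w \<le> length v" if "bs_conj k w v" for v
    using length_lower[OF assms that] .
  have el: "elt_length k w = length w"
    unfolding elt_length_def
  proof (rule Least_equality)
    show "\<exists>w'. bs_eq k w w' \<and> length w' = length w" using bs_refl by blast
  next
    fix n assume "\<exists>w'. bs_eq k w w' \<and> length w' = n"
    then obtain w' where "bs_eq k w w'" "length w' = n" by blast
    then have "bs_conj k w w'" using conj_trans_eq[OF conj_self] by blast
    then show "length w \<le> n" using low \<open>length w' = n\<close> by blast
  qed
  show ?thesis unfolding conj_geodesic_def geodesic_def
  proof (intro conjI allI impI)
    show "length w = elt_length k w" using el by simp
  next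
    fix v assume c: "bs_conj k w v"
    obtain w' where "bs_eq k v w'" "length w' = elt_length k v" using elt_length_ex by blast
    then have "bs_conj k w w'" "length w' = elt_length k v" using conj_trans_eq[OF c] by blast+
    then show "elt_length k w \<le> elt_length k v" using low el by force
  qed
qed

lemma rot_conj: "bs_conj k u (rotate n u)"
proof -
  define d where "d = n mod length u"
  define P where "P = take d u"
  define D where "D = drop d u"
  have u: "u = P @ D" by (simp add: P_def D_def)
  have r: "rotate n u = D @ P" by (simp add: rotate_drop_take d_def P_def D_def)
  have "bs_eq k (inv_word P @ P @ (D @ P)) (D @ P)"
    by (rule bs_cancel_word)
  then have "bs_eq k (inv_word P @ u @ inv_word (inv_word P)) (rotate n u)"
    unfolding r inv_inv_word by (simp add: u)
  then show ?thesis unfolding bs_conj_def by blast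
qed

theorem lemma4p4:
  fixes r k m :: nat
  assumes "r \<ge> 1" and "k = 2 * r + 1" and "m > 0"
  shows "(\<forall>u\<in>A_set r m. \<forall>v\<in>A_set r m. bs_conj k u v \<longleftrightarrow> (\<exists>n. rotate n u = v))
         \<and> (\<forall>w\<in>A_set r m. conj_geodesic k w)"
proof (intro conjI ballI iffI)
  fix w assume "w \<in> A_set r m"
  then obtain xs where "w = blockword xs" "length xs = m" "bal r xs" by (rule A_setE)
  then show "conj_geodesic k w" using geod_part[OF _ _ assms(3) _ assms(2)] by simp
next
  fix u v assume "u \<in> A_set r m" "v \<in> A_set r m" and ex: "\<exists>n. rotate n u = v"
  then show "bs_conj k u v" using rot_conj by blast
next
  fix u v assume uA: "u \<in> A_set r m" and vA: "v \<in> A_set r m" and c: "bs_conj k u v"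
  let ?K = "int k"
  obtain xs where u: "u = blockword xs" and lx: "length xs = m" and bx: "bal r xs"
    and nx: "xs \<noteq> replicate m (- int r)" using uA by (rule A_setE)
  obtain ys where v: "v = blockword ys" and ly: "length ys = m" and bY: "bal r ys"
    and ny: "ys \<noteq> replicate m (- int r)" using vA by (rule A_setE)
  obtain j where dv: "(?K ^ m - 1) dvd (phi ?K m 0 v - vl ?K (rotate j xs))"
    using conj_data[OF u lx assms(3) c] by blast
  have pv: "phi ?K m 0 v = vl ?K ys" using phi_blockword[of 0 ys m ?K] v ly by simp
  define zs where "zs = rotate j xs"
  have lz: "length zs = m" and bz: "bal r zs" using lx bx by (auto simp: zs_def bal_def)
  have nz: "zs \<noteq> replicate m (- int r)"
  proof
    assume "zs = replicate m (- int r)"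
    moreover have "set xs = set zs" by (simp add: zs_def)
    ultimately have "\<forall>y\<in>set xs. y = - int r" by simp
    then show False using nx lx replicate_eqI[of xs m "- int r"] by blast
  qed
  have K: "?K = 2 * int r + 1" using assms by simp
  note Ry = vl_range[OF bY K] and Rz = vl_range[OF bz K]
  have Mpos: "?K ^ m - 1 > 0" using assms by (simp add: one_less_power)
  obtain c where cc: "vl ?K ys - vl ?K zs = (?K ^ m - 1) * c" using dv pv zs_def by (auto elim: dvdE)
  have b1: "2 * vl ?K ys \<le> ?K ^ m - 1" "- (?K ^ m - 1) < 2 * vl ?K ys" using Ry ly ny by auto
  have b2: "2 * vl ?K zs \<le> ?K ^ m - 1" "- (?K ^ m - 1) < 2 * vl ?K zs" using Rz lz nz by auto
  have "c = 0"
  proof (rule ccontr)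
    assume "c \<noteq> 0"
    then have c1: "\<bar>c\<bar> \<ge> 1" by simp
    have "\<bar>(?K ^ m - 1) * c\<bar> = (?K ^ m - 1) * \<bar>c\<bar>" using Mpos by (simp add: abs_mult abs_of_pos)
    moreover have "(?K ^ m - 1) * 1 \<le> (?K ^ m - 1) * \<bar>c\<bar>" using Mpos c1 assms(2) by (intro mult_left_mono) auto
    ultimately have "\<bar>(?K ^ m - 1) * c\<bar> \<ge> ?K ^ m - 1" by simp
    then show False using cc b1 b2 by linarith
  qed
  then have "vl ?K ys = vl ?K zs" using cc by simp
  then have "ys = zs" using vl_unique[OF bY bz K] ly lz by simp
  then have "v = blockword (rotate j xs)" using v zs_def by simp
  moreover obtain n where "blockword (rotate j xs) = rotate n (blockword xs)" using blockword_rotate by blast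
  ultimately show "\<exists>n. rotate n u = v" using u by auto
qed

end
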